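(* For any $\epsilon,\gamma>0$ and any graph $\mathcal{G}=(\mathcal{V},\mathcal{E})$ containing a perfect matching, with $V=|\mathcal{V}|$ and $E=|\mathcal{E}|$, there is an algorithm $\mathcal{A}$ that is $\epsilon$-differentially private on $\mathcal{G}$ that on input $w:\mathcal{E}\to\mathbb{R}$ releases, with probability at least $1-\gamma$, a perfect matching of $\mathcal{G}$ whose weight is at most $(V/\epsilon)\ln(E/\gamma)$ larger than the minimum weight of a perfect matching of $(\mathcal{G},w)$.
   Context: Private edge weight model (with real, possibly negative, weights): for a graph $\mathcal{G}=(\mathcal{V},\mathcal{E})$, a weight function is $w:\mathcal{E}\to\mathbb{R}$. Two weight functions $w,w'$ are neighboring if $\sum_{e\in\mathcal{E}}|w(e)-w'(e)|\le1$. A randomized algorithm $\mathcal{A}$ on weight functions is $\epsilon$-differentially private on $\mathcal{G}$ if for all neighboring $w,w'$ and all sets $S$ of outputs, $\Pr[\mathcal{A}(w)\in S]\le e^{\epsilon}\Pr[\mathcal{A}(w')\in S]$. The weight of a matching is the sum of its edge weights. *)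

theory Defs
  imports "HOL-Probability.Probability"
begin

definition simple_graph :: "'a set \<Rightarrow> 'a set set \<Rightarrow> bool" where
  "simple_graph Vs Es \<longleftrightarrow> finite Vs \<and>
     (\<forall>e\<in>Es. \<exists>u v. u \<noteq> v \<and> u \<in> Vs \<and> v \<in> Vs \<and> e = {u, v})"

definition perfect_matching :: "'a set \<Rightarrow> 'a set set \<Rightarrow> 'a set set \<Rightarrow> bool" where
  "perfect_matching Vs Es M \<longleftrightarrow> M \<subseteq> Es \<and>
     (\<forall>v\<in>Vs. \<exists>!e. e \<in> M \<and> v \<in> e)"

definition matching_weight :: "('a set \<Rightarrow> real) \<Rightarrow> 'a set set \<Rightarrow> real" where
  "matching_weight w M = (\<Sum>e\<in>M. w e)"

definition min_pm_weight :: "'a set \<Rightarrow> 'a set set \<Rightarrow> ('a set \<Rightarrow> real) \<Rightarrow> real" where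
  "min_pm_weight Vs Es w = Min (matching_weight w ` {M. perfect_matching Vs Es M})"

definition neighboring :: "'a set set \<Rightarrow> ('a set \<Rightarrow> real) \<Rightarrow> ('a set \<Rightarrow> real) \<Rightarrow> bool" where
  "neighboring Es w w' \<longleftrightarrow> (\<Sum>e\<in>Es. \<bar>w e - w' e\<bar>) \<le> 1"

definition diff_private :: "real \<Rightarrow> 'a set set \<Rightarrow> (('a set \<Rightarrow> real) \<Rightarrow> 'b pmf) \<Rightarrow> bool" where
  "diff_private \<epsilon> Es A \<longleftrightarrow>
     (\<forall>w w' S. neighboring Es w w' \<longrightarrow>
        measure_pmf.prob (A w) S \<le> exp \<epsilon> * measure_pmf.prob (A w') S)"

end

theory Submission
  imports Defs
begin

lemma sg_finite_Es:
  assumes "simple_graph Vs Es" shows "finite Es"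
proof -
  have "Es \<subseteq> Pow Vs" using assms unfolding simple_graph_def by auto
  moreover have "finite Vs" using assms unfolding simple_graph_def by auto
  ultimately show ?thesis by (meson finite_Pow_iff finite_subset)
qed

lemma pm_card:
  assumes sg: "simple_graph Vs Es" and pm: "perfect_matching Vs Es M"
  shows "card Vs = 2 * card M"
proof -
  have MEs: "M \<subseteq> Es" using pm unfolding perfect_matching_def by auto
  have fin: "finite M" using sg_finite_Es[OF sg] MEs finite_subset by blast
  have e2: "\<And>e. e \<in> M \<Longrightarrow> card e = 2 \<and> e \<subseteq> Vs"
    using MEs sg unfolding simple_graph_def by fastforce
  have U: "\<Union>M = Vs"
  proof
    show "\<Union>M \<subseteq> Vs" using e2 by blast
    show "Vs \<subseteq> \<Union>M" using pm unfolding perfect_matching_def by blast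
  qed
  have disj: "pairwise disjnt M"
    unfolding pairwise_def disjnt_def
  proof (intro ballI impI)
    fix e1 e2' assume a: "e1 \<in> M" "e2' \<in> M" "e1 \<noteq> e2'"
    show "e1 \<inter> e2' = {}"
    proof (rule ccontr)
      assume "e1 \<inter> e2' \<noteq> {}"
      then obtain v where v: "v \<in> e1" "v \<in> e2'" by blast
      then have "v \<in> Vs" using e2 a by blast
      then have "\<exists>!e. e \<in> M \<and> v \<in> e" using pm unfolding perfect_matching_def by blast
      then show False using a v by blast
    qed
  qed
  have "card Vs = sum card M" using card_Union_disjoint[OF disj] e2 U
    by (metis card.infinite zero_neq_numeral)
  also have "\<dots> = sum (\<lambda>_. 2) M" using e2 by (intro sum.cong) auto
  finally show ?thesis by simp
qed

lemma card_R:
  assumes sg: "simple_graph Vs Es"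
  shows "card {M. perfect_matching Vs Es M} \<le> card Es ^ (card Vs div 2)"
proof -
  let ?k = "card Vs div 2"
  have "{M. perfect_matching Vs Es M} \<subseteq> {B. B \<subseteq> Es \<and> card B = ?k}"
  proof
    fix M assume "M \<in> {M. perfect_matching Vs Es M}"
    then have pm: "perfect_matching Vs Es M" by simp
    then have "M \<subseteq> Es" unfolding perfect_matching_def by simp
    moreover have "card M = ?k" using pm_card[OF sg pm] by simp
    ultimately show "M \<in> {B. B \<subseteq> Es \<and> card B = ?k}" by simp
  qed
  moreover have "finite {B. B \<subseteq> Es \<and> card B = ?k}" using sg_finite_Es[OF sg] by simp
  ultimately have "card {M. perfect_matching Vs Es M} \<le> card Es choose ?k"
    using n_subsets[OF sg_finite_Es[OF sg], of ?k] card_mono[of "{B. B \<subseteq> Es \<and> card B = ?k}" "{M. perfect_matching Vs Es M}"] by simp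
  also have "\<dots> \<le> card Es ^ ?k"
  proof (cases "?k \<le> card Es")
    case True then show ?thesis by (rule binomial_le_pow)
  next
    case False then show ?thesis by (simp add: binomial_eq_0)
  qed
  finally show ?thesis .
qed


lemma final_ineq:
  fixes x \<gamma> :: real and E k :: nat
  assumes g: "0 < \<gamma>" "\<gamma> < 1" and x0: "0 \<le> x" and xb: "x \<le> real E ^ k - 1"
  shows "x * exp (- (real k * ln (real E / \<gamma>))) \<le> \<gamma>"
proof (cases "k = 0")
  case True then show ?thesis using xb x0 g by simp
next
  case k: False
  show ?thesis
  proof (cases "E = 0")
    case True then show ?thesis using xb x0 k by (simp add: power_0_left)
  next
    case False
    then have Ep: "real E > 0" by simp
    have "exp (real k * ln (real E / \<gamma>)) = (real E / \<gamma>) ^ k"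
      using Ep g by (simp add: exp_of_nat_mult)
    then have e: "exp (- (real k * ln (real E / \<gamma>))) = (\<gamma> / real E) ^ k"
      by (simp add: exp_minus power_divide)
    have "x * (\<gamma> / real E) ^ k \<le> real E ^ k * (\<gamma> / real E) ^ k"
      using xb g by (intro mult_right_mono) auto
    also have "\<dots> = \<gamma> ^ k" using Ep by (simp add: power_divide)
    also have "\<dots> \<le> \<gamma> ^ 1" using g k by (intro power_decreasing) auto
    finally show ?thesis using e by simp
  qed
qed

theorem theoremB6:
  fixes Vs :: "'a set" and Es :: "'a set set" and \<epsilon> \<gamma> :: real
  assumes "\<epsilon> > 0" and "\<gamma> > 0"
    and "simple_graph Vs Es"
    and "\<exists>M. perfect_matching Vs Es M"
  shows "\<exists>A :: ('a set \<Rightarrow> real) \<Rightarrow> 'a set set pmf.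
           diff_private \<epsilon> Es A \<and>
           (\<forall>w. measure_pmf.prob (A w)
                  {M. perfect_matching Vs Es M \<and>
                      matching_weight w M \<le> min_pm_weight Vs Es w
                        + (real (card Vs) / \<epsilon>) * ln (real (card Es) / \<gamma>)}
                \<ge> 1 - \<gamma>)"
proof -
  note epos = assms(1) and gpos = assms(2) and sg = assms(3)
  define R where "R = {M. perfect_matching Vs Es M}"
  define a where "a = \<epsilon> / 2"
  have apos: "a > 0" using epos a_def by simp
  define Z where "Z = (\<lambda>w. \<Sum>M\<in>R. exp (- a * matching_weight w M))"
  define f where "f = (\<lambda>w M. if M \<in> R then exp (- a * matching_weight w M) / Z w else 0)"
  define A where "A = (\<lambda>w. embed_pmf (f w))"
  have finEs: "finite Es" using sg_finite_Es[OF sg] .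
  have RE: "\<And>M. M \<in> R \<Longrightarrow> M \<subseteq> Es" unfolding R_def perfect_matching_def by auto
  have finR: "finite R"
  proof -
    have "R \<subseteq> Pow Es" using RE by auto
    then show ?thesis using finEs by (meson finite_Pow_iff finite_subset)
  qed
  have Rne: "R \<noteq> {}" using assms(4) R_def by auto
  have Zpos: "\<And>w. Z w > 0" unfolding Z_def using finR Rne by (intro sum_pos) auto
  have fnn: "\<And>w M. 0 \<le> f w M" unfolding f_def using Zpos by (simp add: less_imp_le)
  have fpos: "\<And>w M. M \<in> R \<Longrightarrow> 0 < f w M" unfolding f_def using Zpos by simp
  have sumf: "\<And>w. (\<Sum>M\<in>R. f w M) = 1"
  proof -
    fix w
    have "(\<Sum>M\<in>R. f w M) = (\<Sum>M\<in>R. exp (- a * matching_weight w M) / Z w)"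
      unfolding f_def by (intro sum.cong) auto
    also have "\<dots> = Z w / Z w" unfolding Z_def by (rule sum_divide_distrib[symmetric])
    also have "\<dots> = 1" using Zpos[of w] by simp
    finally show "(\<Sum>M\<in>R. f w M) = 1" .
  qed
  have intf: "\<And>w. (\<integral>\<^sup>+x. ennreal (f w x) \<partial>count_space UNIV) = 1"
  proof -
    fix w
    have "(\<integral>\<^sup>+x. ennreal (f w x) \<partial>count_space UNIV) = (\<Sum>x\<in>R. ennreal (f w x))"
      by (rule nn_integral_count_space') (use finR in \<open>auto simp: f_def\<close>)
    also have "\<dots> = ennreal (\<Sum>x\<in>R. f w x)" using fnn by (simp add: sum_ennreal)
    finally show "(\<integral>\<^sup>+x. ennreal (f w x) \<partial>count_space UNIV) = 1" using sumf by simp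
  qed
  have pmfA: "\<And>w M. pmf (A w) M = f w M"
    unfolding A_def using pmf_embed_pmf[OF fnn intf] by simp
  have setA: "\<And>w. set_pmf (A w) = R"
  proof -
    fix w
    have "set_pmf (A w) = {x. f w x \<noteq> 0}" unfolding A_def using set_embed_pmf[OF fnn intf] by simp
    also have "\<dots> = R"
    proof
      show "{x. f w x \<noteq> 0} \<subseteq> R" unfolding f_def by auto
      show "R \<subseteq> {x. f w x \<noteq> 0}"
      proof
        fix x assume "x \<in> R"
        then have "0 < f w x" by (rule fpos)
        then show "x \<in> {x. f w x \<noteq> 0}" by simp
      qed
    qed
    finally show "set_pmf (A w) = R" .
  qed
  have probA: "\<And>w S. measure_pmf.prob (A w) S = (\<Sum>M\<in>S \<inter> R. f w M)"
  proof -
    fix w S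
    have "measure_pmf.prob (A w) S = measure_pmf.prob (A w) (S \<inter> R)"
      using measure_Int_set_pmf[of "A w" S] setA by simp
    also have "\<dots> = (\<Sum>M\<in>S \<inter> R. f w M)"
      using finR by (simp add: measure_measure_pmf_finite pmfA)
    finally show "measure_pmf.prob (A w) S = (\<Sum>M\<in>S \<inter> R. f w M)" .
  qed
  have DP: "diff_private \<epsilon> Es A"
    unfolding diff_private_def
  proof (intro allI impI)
    fix w w' :: "'a set \<Rightarrow> real" and S
    assume nb: "neighboring Es w w'"
    have diff: "\<bar>matching_weight w M - matching_weight w' M\<bar> \<le> 1" if M: "M \<in> R" for M
    proof -
      have "matching_weight w M - matching_weight w' M = (\<Sum>e\<in>M. w e - w' e)"
        unfolding matching_weight_def by (simp add: sum_subtractf)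
      also have "\<bar>\<dots>\<bar> \<le> (\<Sum>e\<in>M. \<bar>w e - w' e\<bar>)" by (rule sum_abs)
      also have "\<dots> \<le> (\<Sum>e\<in>Es. \<bar>w e - w' e\<bar>)"
        using finEs RE[OF M] by (intro sum_mono2) auto
      also have "\<dots> \<le> 1" using nb unfolding neighboring_def .
      finally show ?thesis .
    qed
    have e1: "exp (- a * matching_weight w M) \<le> exp a * exp (- a * matching_weight w' M)"
      if M: "M \<in> R" for M
    proof -
      have "a * (matching_weight w' M - matching_weight w M) \<le> a * 1"
        using diff[OF M] apos by (intro mult_left_mono) auto
      then have "- a * matching_weight w M \<le> a + - a * matching_weight w' M"
        by (simp add: algebra_simps)
      then show ?thesis by (simp add: exp_add[symmetric])
    qed
    have e2: "exp (- a * matching_weight w' M) \<le> exp a * exp (- a * matching_weight w M)"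
      if M: "M \<in> R" for M
    proof -
      have "a * (matching_weight w M - matching_weight w' M) \<le> a * 1"
        using diff[OF M] apos by (intro mult_left_mono) auto
      then have "- a * matching_weight w' M \<le> a + - a * matching_weight w M"
        by (simp add: algebra_simps)
      then show ?thesis by (simp add: exp_add[symmetric])
    qed
    have Zle: "Z w' \<le> exp a * Z w"
      unfolding Z_def sum_distrib_left using e2 by (intro sum_mono) auto
    have fle: "f w M \<le> exp \<epsilon> * f w' M" if M: "M \<in> R" for M
    proof -
      have "f w M = exp (- a * matching_weight w M) / Z w" using M f_def by simp
      also have "\<dots> \<le> (exp a * exp (- a * matching_weight w' M)) / (Z w' / exp a)"
        using e1[OF M] Zle Zpos[of w'] by (intro frac_le) (auto simp: divide_le_eq mult.commute)
      also have "\<dots> = (exp a * exp a) * (exp (- a * matching_weight w' M) / Z w')"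
        by (simp add: field_simps)
      also have "exp a * exp a = exp \<epsilon>" using a_def by (simp add: exp_add[symmetric])
      also have "exp (- a * matching_weight w' M) / Z w' = f w' M" using M f_def by simp
      finally show ?thesis .
    qed
    have "measure_pmf.prob (A w) S = (\<Sum>M\<in>S \<inter> R. f w M)" by (rule probA)
    also have "\<dots> \<le> (\<Sum>M\<in>S \<inter> R. exp \<epsilon> * f w' M)"
      using fle by (intro sum_mono) auto
    also have "\<dots> = exp \<epsilon> * measure_pmf.prob (A w') S"
      by (simp add: probA sum_distrib_left)
    finally show "measure_pmf.prob (A w) S \<le> exp \<epsilon> * measure_pmf.prob (A w') S" .
  qed
  have UT: "measure_pmf.prob (A w)
                  {M. perfect_matching Vs Es M \<and>
                      matching_weight w M \<le> min_pm_weight Vs Es w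
                        + (real (card Vs) / \<epsilon>) * ln (real (card Es) / \<gamma>)}
                \<ge> 1 - \<gamma>" for w
  proof (cases "\<gamma> < 1")
    case False then show ?thesis using measure_nonneg[of "measure_pmf (A w)"] by (smt (verit))
  next
    case glt: True
    define OPT where "OPT = min_pm_weight Vs Es w"
    define c where "c = (real (card Vs) / \<epsilon>) * ln (real (card Es) / \<gamma>)"
    define G where "G = {M. perfect_matching Vs Es M \<and> matching_weight w M \<le> OPT + c}"
    define B where "B = {M \<in> R. \<not> matching_weight w M \<le> OPT + c}"
    have OPTd: "OPT = Min (matching_weight w ` R)" unfolding OPT_def min_pm_weight_def R_def ..
    have "OPT \<in> matching_weight w ` R" unfolding OPTd using finR Rne by (intro Min_in) auto
    then obtain Mo where Mo: "Mo \<in> R" "matching_weight w Mo = OPT" by auto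
    have OPTle: "\<And>M. M \<in> R \<Longrightarrow> OPT \<le> matching_weight w M"
      unfolding OPTd using finR by (intro Min_le) auto
    have BG: "(UNIV - G) \<inter> R = B" unfolding G_def B_def R_def by auto
    have "measure_pmf.prob (A w) (UNIV - G) = (\<Sum>M\<in>B. f w M)" using probA BG by simp
    have ZO: "exp (- a * OPT) \<le> Z w"
      unfolding Z_def using member_le_sum[of Mo R "\<lambda>M. exp (- a * matching_weight w M)"] Mo finR by simp
    have fB: "f w M \<le> exp (- (a * c))" if M: "M \<in> B" for M
    proof -
      have MR: "M \<in> R" and gt: "OPT + c < matching_weight w M" using M B_def by auto
      have "f w M = exp (- a * matching_weight w M) / Z w" using MR f_def by simp
      also have "\<dots> \<le> exp (- a * (OPT + c)) / exp (- a * OPT)"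
        using ZO gt apos by (intro frac_le) auto
      also have "\<dots> = exp (- (a * c))" by (simp add: exp_diff[symmetric] algebra_simps)
      finally show ?thesis .
    qed
    have finB: "finite B" using finR B_def by auto
    have sB: "(\<Sum>M\<in>B. f w M) \<le> real (card B) * exp (- (a * c))"
      using sum_mono[of B "f w" "\<lambda>_. exp (- (a * c))"] fB by simp
    define k where "k = card Mo"
    have Vk: "card Vs = 2 * k" using pm_card[OF sg] Mo R_def k_def by auto
    have ac: "a * c = real k * ln (real (card Es) / \<gamma>)"
      using epos unfolding a_def c_def Vk by (simp add: field_simps)
    have cR: "card R \<le> card Es ^ k" using card_R[OF sg] Vk R_def by simp
    have c0: "c \<ge> 0"
    proof (cases "k = 0")
      case True then show ?thesis unfolding c_def Vk by simp
    next
      case False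
      have "0 < card R" using finR Rne card_gt_0_iff by blast
      then have "0 < card Es ^ k" using cR by linarith
      then have "1 \<le> real (card Es)" using False by (simp add: Suc_le_eq)
      then have "1 \<le> real (card Es) / \<gamma>" using gpos glt by (simp add: le_divide_eq)
      then have "0 \<le> ln (real (card Es) / \<gamma>)" by simp
      then show ?thesis unfolding c_def using epos by simp
    qed
    have "B \<subseteq> R - {Mo}" using Mo B_def c0 by auto
    then have "card B \<le> card (R - {Mo})" using finR by (intro card_mono) auto
    also have "\<dots> = card R - 1" using Mo finR by simp
    finally have cBR: "card B \<le> card R - 1" .
    have "0 < card R" using finR Rne card_gt_0_iff by blast
    then have "card B + 1 \<le> card Es ^ k" using cR cBR by linarith
    then have "real (card B + 1) \<le> real (card Es ^ k)" by (simp only: of_nat_le_iff)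
    then have cB: "real (card B) \<le> real (card Es) ^ k - 1" by simp
    have bad: "measure_pmf.prob (A w) (UNIV - G) \<le> \<gamma>"
      using \<open>measure_pmf.prob (A w) (UNIV - G) = (\<Sum>M\<in>B. f w M)\<close> sB
        final_ineq[OF gpos glt _ cB] ac by simp
    have "measure_pmf.prob (A w) (UNIV - G) = 1 - measure_pmf.prob (A w) G"
      using measure_pmf.prob_compl[of G "A w"] by simp
    then have "measure_pmf.prob (A w) G \<ge> 1 - \<gamma>" using bad by simp
    then show ?thesis unfolding G_def OPT_def c_def .
  qed
  show ?thesis using DP UT by blast
qed

end
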